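(* Let $m\ge 1$ be an odd integer with prime factorization $m=p_1^{e_1}\cdots p_r^{e_r}$ ($r\ge 1$, $p_1,\dots,p_r$ distinct odd primes, $e_j\ge 1$). Let $\beta=\min\{C(p_j,e_j)\mid 1\le j\le r\}$. Suppose there is exactly one index $j$ with $C(p_j,e_j)=\beta$. Then $N_m(x)\sim N_{p_j^{e_j}}(x)$ as $x\to\infty$. Consequently $$N_m(x)=c\,\frac{x}{(\log x)^{\beta}}\Bigl(1+O\Bigl(\frac{(\log\log x)^5}{\log x}\Bigr)\Bigr)\cdot(1+o(1))$$ for some positive constant $c$; that is, $N_m(x)\sim c\,x/(\log x)^{\beta}$.
   Context: For an odd integer $u$, $l(u)$ denotes the multiplicative order of $2$ modulo $u$ (the least $l\ge 1$ with $2^l\equiv 1 \pmod u$). $N_m(x)$ denotes the number of odd integers $u\le x$ with $m\nmid l(u)$. For a prime $q$ and integer $n\ge 1$, $C(q,n):=q^{2-n}/(q^2-1)$. It is known (a result of H. Müller) that for every odd prime $q$ and every fixed $n\ge 1$, $N_{q^n}(x)=c_{q^n}\frac{x}{(\log x)^{C(q,n)}}\bigl(1+O((\log\log x)^5/\log x)\bigr)$ with $c_{q^n}>0$ a constant. *)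

theory Defs
  imports "HOL-Analysis.Analysis" "HOL-Number_Theory.Number_Theory" "HOL-Library.Landau_Symbols"
begin

definition ell :: "nat \<Rightarrow> nat" where
  "ell u = ord u 2"

definition NN :: "nat \<Rightarrow> real \<Rightarrow> real" where
  "NN m x = real (card {u::nat. odd u \<and> real u \<le> x \<and> \<not> m dvd ell u})"

definition CC :: "nat \<Rightarrow> nat \<Rightarrow> real" where
  "CC q n = real q powr (2 - real n) / (real q ^ 2 - 1)"

text \<open>Mueller's theorem (a known result, used as hypothesis).\<close>
definition mueller_asymptotic :: bool where
  "mueller_asymptotic \<longleftrightarrow>
     (\<forall>q n. prime q \<and> odd q \<and> n \<ge> 1 \<longrightarrow>
        (\<exists>c>0. (\<lambda>x. NN (q ^ n) x / (c * x / ln x powr CC q n) - 1)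
                 \<in> O[at_top](\<lambda>x. (ln (ln x)) ^ 5 / ln x)))"

end

theory Submission imports Defs "HOL-Real_Asymp.Real_Asymp" begin

lemma not_dvd_iff_pp:
  fixes m k :: nat assumes "m > 0"
  shows "(\<not> m dvd k) \<longleftrightarrow> (\<exists>p\<in>prime_factors m. \<not> p ^ multiplicity p m dvd k)"
proof
  assume "\<not> m dvd k"
  show "\<exists>p\<in>prime_factors m. \<not> p ^ multiplicity p m dvd k"
  proof (rule ccontr)
    assume H: "\<not> ?thesis"
    have "k \<noteq> 0" using \<open>\<not> m dvd k\<close> by (metis dvd_0_right)
    have "m dvd k"
    proof (rule multiplicity_le_imp_dvd)
      show "m \<noteq> 0" using assms by simp
      fix p :: nat assume "prime p"
      show "multiplicity p m \<le> multiplicity p k"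
      proof (cases "p \<in> prime_factors m")
        case True
        then have "p ^ multiplicity p m dvd k" using H by auto
        then show ?thesis using \<open>prime p\<close> \<open>k \<noteq> 0\<close>
          by (intro power_dvd_iff_le_multiplicity[THEN iffD1]) (auto simp: prime_gt_1_nat)
      next
        case False
        then have "multiplicity p m = 0" using \<open>prime p\<close> assms
          by (simp add: prime_factors_multiplicity)
        then show ?thesis by simp
      qed
    qed
    then show False using \<open>\<not> m dvd k\<close> by simp
  qed
next
  assume "\<exists>p\<in>prime_factors m. \<not> p ^ multiplicity p m dvd k"
  then obtain p where "\<not> p ^ multiplicity p m dvd k" by blast
  then show "\<not> m dvd k" using multiplicity_dvd[of p m] dvd_trans by blast
qed

lemma fin_set: "finite {u::nat. odd u \<and> real u \<le> x \<and> P u}"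
  by (rule finite_subset[of _ "{..nat \<lfloor>x\<rfloor>}"]) (auto simp: le_nat_floor)

lemma NN_union:
  fixes m :: nat assumes "m > 0"
  shows "NN m x \<le> (\<Sum>p\<in>prime_factors m. NN (p ^ multiplicity p m) x)"
proof -
  have "{u::nat. odd u \<and> real u \<le> x \<and> \<not> m dvd ell u} =
        (\<Union>p\<in>prime_factors m. {u::nat. odd u \<and> real u \<le> x \<and> \<not> p ^ multiplicity p m dvd ell u})"
    using not_dvd_iff_pp[OF assms] by auto
  then have "card {u::nat. odd u \<and> real u \<le> x \<and> \<not> m dvd ell u} \<le>
     (\<Sum>p\<in>prime_factors m. card {u::nat. odd u \<and> real u \<le> x \<and> \<not> p ^ multiplicity p m dvd ell u})"
    by (simp add: card_UN_le)
  then show ?thesis unfolding NN_def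
    by (metis (no_types, lifting) of_nat_le_iff of_nat_sum sum.cong)
qed

lemma NN_mono:
  fixes m :: nat assumes "m > 0" "p \<in> prime_factors m"
  shows "NN (p ^ multiplicity p m) x \<le> NN m x"
proof -
  have "card {u::nat. odd u \<and> real u \<le> x \<and> \<not> p ^ multiplicity p m dvd ell u} \<le>
        card {u::nat. odd u \<and> real u \<le> x \<and> \<not> m dvd ell u}"
    by (rule card_mono[OF fin_set]) (use not_dvd_iff_pp[OF assms(1)] assms(2) in auto)
  then show ?thesis unfolding NN_def by simp
qed

lemma mueller_equiv:
  assumes "mueller_asymptotic" "prime q" "odd q" "n \<ge> 1"
  shows "\<exists>c>0. (\<lambda>x. NN (q ^ n) x) \<sim>[at_top] (\<lambda>x. c * x / ln x powr CC q n)"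
proof -
  obtain c where c: "c > 0" and
    O: "(\<lambda>x. NN (q ^ n) x / (c * x / ln x powr CC q n) - 1) \<in> O[at_top](\<lambda>x. (ln (ln x)) ^ 5 / ln x)"
    using assms unfolding mueller_asymptotic_def by blast
  have "(\<lambda>x::real. (ln (ln x)) ^ 5 / ln x) \<in> o[at_top](\<lambda>_. 1)" by real_asymp
  with O have S: "(\<lambda>x. NN (q ^ n) x / (c * x / ln x powr CC q n) - 1) \<in> o[at_top](\<lambda>_. 1)"
    by (rule landau_o.big_small_trans)
  then have "((\<lambda>x. NN (q ^ n) x / (c * x / ln x powr CC q n) - 1) \<longlongrightarrow> 0) at_top"
    using smalloD_tendsto[OF S] by simp
  then have "((\<lambda>x. NN (q ^ n) x / (c * x / ln x powr CC q n) - 1 + 1) \<longlongrightarrow> 0 + 1) at_top"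
    by (intro tendsto_add tendsto_const)
  then have "((\<lambda>x. NN (q ^ n) x / (c * x / ln x powr CC q n)) \<longlongrightarrow> 1) at_top" by simp
  then show ?thesis using c by (blast intro: asymp_equivI')
qed

lemma small_g:
  fixes a b c d :: real assumes "a < b" "c > 0" "d > 0"
  shows "(\<lambda>x::real. c * x / ln x powr b) \<in> o[at_top](\<lambda>x. d * x / ln x powr a)"
proof -
  have "(\<lambda>x::real. ln x powr (-b)) \<in> o[at_top](\<lambda>x. ln x powr (-a))"
    using assms by (subst powr_smallo_iff) (auto intro: ln_at_top)
  then have "(\<lambda>x::real. (c*x) * ln x powr (-b)) \<in> o[at_top](\<lambda>x. (d*x) * ln x powr (-a))"
    using assms by (intro landau_o.big_small_mult) simp_all
  moreover have "eventually (\<lambda>x::real. c * x / ln x powr b = (c*x) * ln x powr (-b)) at_top"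
     "eventually (\<lambda>x::real. d * x / ln x powr a = (d*x) * ln x powr (-a)) at_top"
    by (auto simp: powr_minus divide_inverse)
  ultimately show ?thesis by (subst landau_o.small.cong_ex) (simp_all only:)
qed

theorem lemma1:
  fixes m :: nat
  assumes mueller: "mueller_asymptotic"
    and odd_m: "odd m" and m_gt: "m > 1"
    and unique: "\<exists>!p. p \<in> prime_factors m \<and>
        CC p (multiplicity p m) = Min ((\<lambda>q. CC q (multiplicity q m)) ` prime_factors m)"
  shows "(\<forall>p \<in> prime_factors m.
           CC p (multiplicity p m) = Min ((\<lambda>q. CC q (multiplicity q m)) ` prime_factors m) \<longrightarrow>
           (\<lambda>x. NN m x) \<sim>[at_top] (\<lambda>x. NN (p ^ multiplicity p m) x)) \<and>
         (\<exists>c>0. (\<lambda>x. NN m x) \<sim>[at_top]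
           (\<lambda>x. c * x / ln x powr Min ((\<lambda>q. CC q (multiplicity q m)) ` prime_factors m)))"
proof -
  define P where "P = prime_factors m"
  define \<beta> where "\<beta> = Min ((\<lambda>q. CC q (multiplicity q m)) ` P)"
  have m0: "m > 0" using m_gt by simp
  have finP: "finite P" unfolding P_def by simp
  obtain p where pP: "p \<in> P" and pb: "CC p (multiplicity p m) = \<beta>"
    and uq: "\<And>q. q \<in> P \<Longrightarrow> CC q (multiplicity q m) = \<beta> \<Longrightarrow> q = p"
    using unique unfolding P_def \<beta>_def by blast
  have qprops: "prime q \<and> odd q \<and> multiplicity q m \<ge> 1" if "q \<in> P" for q
  proof -
    have "prime q" "q dvd m" using that unfolding P_def by auto
    moreover have "multiplicity q m > 0"
      using that m0 unfolding P_def by (simp add: prime_factors_multiplicity)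
    moreover have "odd q" using \<open>q dvd m\<close> odd_m by (metis dvd_trans even_two_times_div_two dvd_triv_left)
    ultimately show ?thesis by simp
  qed
  have "\<forall>q\<in>P. \<exists>c>0. (\<lambda>x. NN (q ^ multiplicity q m) x) \<sim>[at_top]
          (\<lambda>x. c * x / ln x powr CC q (multiplicity q m))"
    using qprops mueller_equiv[OF mueller] by blast
  then obtain cf where cf: "\<And>q. q \<in> P \<Longrightarrow> cf q > 0"
    and eqv: "\<And>q. q \<in> P \<Longrightarrow> (\<lambda>x. NN (q ^ multiplicity q m) x) \<sim>[at_top]
          (\<lambda>x. cf q * x / ln x powr CC q (multiplicity q m))"
    by metis
  define g where "g = (\<lambda>x::real. cf p * x / ln x powr \<beta>)"
  define S where "S = (\<lambda>x. \<Sum>q\<in>P-{p}. NN (q ^ multiplicity q m) x)"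
  have Np: "(\<lambda>x. NN (p ^ multiplicity p m) x) \<sim>[at_top] g"
    using eqv[OF pP] pb unfolding g_def by simp
  have "(\<lambda>x. NN (q ^ multiplicity q m) x) \<in> o[at_top](g)" if q: "q \<in> P-{p}" for q
  proof -
    have "\<beta> \<le> CC q (multiplicity q m)" unfolding \<beta>_def using q finP by (intro Min_le) auto
    moreover have "CC q (multiplicity q m) \<noteq> \<beta>" using uq q by blast
    ultimately have lt: "\<beta> < CC q (multiplicity q m)" by simp
    have "(\<lambda>x. NN (q ^ multiplicity q m) x) \<in> O[at_top](\<lambda>x. cf q * x / ln x powr CC q (multiplicity q m))"
      using eqv q by (intro asymp_equiv_imp_bigo) auto
    moreover have "(\<lambda>x::real. cf q * x / ln x powr CC q (multiplicity q m)) \<in> o[at_top](g)"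
      unfolding g_def using lt cf q pP by (intro small_g) auto
    ultimately show ?thesis by (rule landau_o.big_small_trans)
  qed
  then have So: "S \<in> o[at_top](g)" unfolding S_def by (intro big_sum_in_smallo)
  have "(\<lambda>x. (NN (p ^ multiplicity p m) x - g x) + S x) \<in> o[at_top](g)"
    using asymp_equiv_imp_diff_smallo[OF Np] So by (intro sum_in_smallo(1))
  then have "(\<lambda>x. (NN (p ^ multiplicity p m) x + S x) - g x) \<in> o[at_top](g)"
    by (simp add: algebra_simps)
  then have U: "(\<lambda>x. NN (p ^ multiplicity p m) x + S x) \<sim>[at_top] g"
    by (rule smallo_imp_asymp_equiv)
  have sandw: "NN m x \<in> {NN (p ^ multiplicity p m) x .. NN (p ^ multiplicity p m) x + S x}" for x
  proof -
    have "NN m x \<le> (\<Sum>q\<in>P. NN (q ^ multiplicity q m) x)"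
      using NN_union[OF m0] unfolding P_def by simp
    also have "\<dots> = NN (p ^ multiplicity p m) x + S x"
      unfolding S_def using finP pP by (simp add: sum.remove)
    finally show ?thesis using NN_mono[OF m0, of p x] pP unfolding P_def by simp
  qed
  have Nm: "(\<lambda>x. NN m x) \<sim>[at_top] g"
    by (rule asymp_equiv_sandwich_real[OF Np U]) (use sandw in simp)
  have Nmp: "(\<lambda>x. NN m x) \<sim>[at_top] (\<lambda>x. NN (p ^ multiplicity p m) x)"
    using Nm Np by (meson asymp_equiv_sym asymp_equiv_trans)
  show ?thesis
  proof
    show "\<forall>p'\<in>prime_factors m.
           CC p' (multiplicity p' m) = Min ((\<lambda>q. CC q (multiplicity q m)) ` prime_factors m) \<longrightarrow>
           (\<lambda>x. NN m x) \<sim>[at_top] (\<lambda>x. NN (p' ^ multiplicity p' m) x)"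
      using uq Nmp unfolding P_def \<beta>_def by blast
    show "\<exists>c>0. (\<lambda>x. NN m x) \<sim>[at_top]
           (\<lambda>x. c * x / ln x powr Min ((\<lambda>q. CC q (multiplicity q m)) ` prime_factors m))"
      using Nm cf[OF pP] unfolding g_def \<beta>_def P_def by blast
  qed
qed

end
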